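(* In the social learning model, suppose $G_-$ and $G_+$ are continuous and the left tail of $G_-$ is convex and differentiable. Then for every $L\in\mathbb{R}$ there exists $m_L>0$ such that for every $t\ge1$ and every $x\ge L$ with $\mathbb{P}_+(\ell_t=x)>0$, $$\mathbb{P}_+(E_t\mid \ell_t=x)\ge m_L.$$
   Context: Social learning model. A state $\theta\in\{-1,+1\}$ is drawn with $\mathbb{P}(\theta=+1)=\mathbb{P}(\theta=-1)=1/2$. Agents $t=1,2,\dots$ receive private signals $s_t\in\mathbb{R}$ that are i.i.d. conditionally on $\theta$, with CDF $F_+$ if $\theta=+1$ and $F_-$ if $\theta=-1$; $F_+$ and $F_-$ are mutually absolutely continuous. Let $L_t=\log\frac{\mathbb{P}(\theta=+1\mid s_t)}{\mathbb{P}(\theta=-1\mid s_t)}$ be the private log-likelihood ratio, and let $G_+$, $G_-$ denote the CDFs of $L_t$ conditional on $\theta=+1$, $\theta=-1$ respectively. Signals are assumed unbounded: for every $M\in\mathbb{R}$, $\mathbb{P}(L_t>M)>0$ and $\mathbb{P}(L_t<-M)>0$. Agent $t$ observes $a_1,\dots,a_{t-1}$ and her own signal and chooses $a_t\in\{-1,+1\}$ (utility $1$ if $a_t=\theta$, else $0$). The public belief is $\mu_t=\mathbb{P}(\theta=+1\mid a_1,\dots,a_{t-1})$ and $\ell_t=\log\frac{\mu_t}{1-\mu_t}$ (so $\ell_1=0$). In equilibrium $a_t=+1$ iff $\ell_t+L_t>0$, and otherwise $a_t=-1$. Consequently $\ell_{t+1}=\ell_t+D_+(\ell_t)$ if $a_t=+1$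 and $\ell_{t+1}=\ell_t+D_-(\ell_t)$ if $a_t=-1$, where $D_+(x)=\log\frac{1-G_+(-x)}{1-G_-(-x)}$ and $D_-(x)=\log\frac{G_+(-x)}{G_-(-x)}$. We write $\mathbb{P}_+(\cdot)=\mathbb{P}(\cdot\mid\theta=+1)$ and $\mathbb{E}_+$ for the corresponding expectation. "The left tail of $G_-$ is convex and differentiable" means: there exists $x_0\in\mathbb{R}$ such that the restriction of $G_-$ to $(-\infty,x_0)$ is convex and differentiable. $E_t$ denotes the event that $a_\tau=+1$ for all $\tau\ge t$. *)

theory Defs
  imports "HOL-Probability.Probability"
begin

text \<open>The signal laws F+ and F- are probability measures
 mu_p and mu_m on the reals. Conditionally on theta = +1 the signal sequence is
 i.i.d. with law mu_p, i.e. P_+ is the infinite product measure; a point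
 w :: nat => real of it gives the signal w t of agent t (t >= 1; w 0 is unused).\<close>

definition Pplus :: "real measure \<Rightarrow> (nat \<Rightarrow> real) measure" where
  "Pplus mu_p = PiM UNIV (\<lambda>_. mu_p)"

text \<open>Private log-likelihood ratio of a signal s (uniform prior):
 log P(theta=+1|s)/P(theta=-1|s) = log (dF+/dF-)(s).\<close>
definition LLR :: "real measure \<Rightarrow> real measure \<Rightarrow> real \<Rightarrow> real" where
  "LLR mu_p mu_m s = ln (enn2real (RN_deriv mu_m mu_p s))"

definition Gp :: "real measure \<Rightarrow> real measure \<Rightarrow> real \<Rightarrow> real" where
  "Gp mu_p mu_m x = measure mu_p {s \<in> space mu_p. LLR mu_p mu_m s \<le> x}"

definition Gm :: "real measure \<Rightarrow> real measure \<Rightarrow> real \<Rightarrow> real" where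
  "Gm mu_p mu_m x = measure mu_m {s \<in> space mu_m. LLR mu_p mu_m s \<le> x}"

definition Dp :: "real measure \<Rightarrow> real measure \<Rightarrow> real \<Rightarrow> real" where
  "Dp mu_p mu_m x = ln ((1 - Gp mu_p mu_m (-x)) / (1 - Gm mu_p mu_m (-x)))"

definition Dm :: "real measure \<Rightarrow> real measure \<Rightarrow> real \<Rightarrow> real" where
  "Dm mu_p mu_m x = ln (Gp mu_p mu_m (-x) / Gm mu_p mu_m (-x))"

text \<open>Public log-likelihood ratio ell_t (t >= 1), following the equilibrium recursion;
 ell 0 is a dummy value.\<close>
fun pubLLR :: "real measure \<Rightarrow> real measure \<Rightarrow> nat \<Rightarrow> (nat \<Rightarrow> real) \<Rightarrow> real" where
  "pubLLR mu_p mu_m 0 w = 0"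
| "pubLLR mu_p mu_m (Suc 0) w = 0"
| "pubLLR mu_p mu_m (Suc (Suc n)) w =
     (let l = pubLLR mu_p mu_m (Suc n) w in
      if l + LLR mu_p mu_m (w (Suc n)) > 0 then l + Dp mu_p mu_m l else l + Dm mu_p mu_m l)"

definition action :: "real measure \<Rightarrow> real measure \<Rightarrow> nat \<Rightarrow> (nat \<Rightarrow> real) \<Rightarrow> int" where
  "action mu_p mu_m t w = (if pubLLR mu_p mu_m t w + LLR mu_p mu_m (w t) > 0 then 1 else -1)"

definition eventE :: "real measure \<Rightarrow> real measure \<Rightarrow> nat \<Rightarrow> (nat \<Rightarrow> real) set" where
  "eventE mu_p mu_m t = {w \<in> space (Pplus mu_p). \<forall>\<tau>\<ge>t. action mu_p mu_m \<tau> w = 1}"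

definition ellEq :: "real measure \<Rightarrow> real measure \<Rightarrow> nat \<Rightarrow> real \<Rightarrow> (nat \<Rightarrow> real) set" where
  "ellEq mu_p mu_m t x = {w \<in> space (Pplus mu_p). pubLLR mu_p mu_m t w = x}"

end

theory Submission
  imports Defs
begin


lemma gap_nonpos:
  fixes Gp Gm :: "real \<Rightarrow> real"
  assumes Q1: "\<And>a b. a \<le> b \<Longrightarrow> Gp b - Gp a \<le> exp b * (Gm b - Gm a)"
    and P2: "\<And>z. Gp z \<le> exp z * Gm z"
    and mGm: "mono Gm"
    and "z \<le> 0" "w \<le> z"
  shows "(1 - exp w) * Gm w \<le> Gm z - Gp z"
proof -
  have "Gm w \<le> Gm z" using mGm assms(5) by (simp add: monoD)
  have "exp z \<le> 1" using assms(4) by simp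
  have "Gp z - Gp w \<le> exp z * (Gm z - Gm w)" using Q1 assms(5) by blast
  also have "\<dots> \<le> Gm z - Gm w" using \<open>exp z \<le> 1\<close> \<open>Gm w \<le> Gm z\<close>
    by (simp add: mult_left_le_one_le)
  finally have 1: "Gp z - Gp w \<le> Gm z - Gm w" .
  have "Gp w \<le> exp w * Gm w" by (rule P2)
  then show ?thesis using 1 by (simp add: algebra_simps)
qed

lemma gap_pos:
  fixes Gp Gm :: "real \<Rightarrow> real"
  assumes Q2: "\<And>a b. a \<le> b \<Longrightarrow> exp a * (Gm b - Gm a) \<le> Gp b - Gp a"
    and P3: "\<And>z. exp z * (1 - Gm z) \<le> 1 - Gp z"
    and mGm: "mono Gm"
    and "0 < z" "z \<le> c"
  shows "(exp c - 1) * (1 - Gm c) \<le> Gm z - Gp z"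
proof -
  have "Gm z \<le> Gm c" using mGm assms(5) by (simp add: monoD)
  have "1 \<le> exp z" using assms(4) by simp
  have "Gm c - Gm z \<le> exp z * (Gm c - Gm z)" using \<open>1 \<le> exp z\<close> \<open>Gm z \<le> Gm c\<close>
    by (simp add: mult_le_cancel_right1)
  also have "\<dots> \<le> Gp c - Gp z" using Q2 assms(5) by blast
  finally have 1: "Gm c - Gm z \<le> Gp c - Gp z" .
  have "exp c * (1 - Gm c) \<le> 1 - Gp c" by (rule P3)
  then show ?thesis using 1 by (simp add: algebra_simps)
qed

lemma prod_ge_one_minus_sum:
  fixes a :: "nat \<Rightarrow> real"
  assumes "\<And>k. 0 \<le> a k" "\<And>k. a k \<le> 1"
  shows "1 - (\<Sum>k\<in>{K..<N}. a k) \<le> (\<Prod>k\<in>{K..<N}. (1 - a k))"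
proof (induction N)
  case 0 then show ?case by simp
next
  case (Suc N)
  show ?case
  proof (cases "K \<le> N")
    case False then show ?thesis by simp
  next
    case True
    have P: "0 \<le> (\<Prod>k\<in>{K..<N}. (1 - a k))" using assms by (intro prod_nonneg) auto
    have S: "0 \<le> (\<Sum>k\<in>{K..<N}. a k)" using assms by (intro sum_nonneg) auto
    have "(\<Prod>k\<in>{K..<Suc N}. (1 - a k)) = (\<Prod>k\<in>{K..<N}. (1 - a k)) * (1 - a N)"
      using True by (simp add: prod.atLeastLessThan_Suc)
    also have "\<dots> \<ge> (1 - (\<Sum>k\<in>{K..<N}. a k)) * (1 - a N)"
      using Suc.IH assms(2)[of N] by (intro mult_right_mono) auto
    finally have 1: "(1 - (\<Sum>k\<in>{K..<N}. a k)) * (1 - a N) \<le> (\<Prod>k\<in>{K..<Suc N}. (1 - a k))" .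
    have "1 - (\<Sum>k\<in>{K..<Suc N}. a k) = 1 - (\<Sum>k\<in>{K..<N}. a k) - a N"
      using True by (simp add: sum.atLeastLessThan_Suc)
    also have "\<dots> \<le> (1 - (\<Sum>k\<in>{K..<N}. a k)) * (1 - a N)"
      using S assms(1)[of N] by (simp add: algebra_simps)
    finally show ?thesis using 1 by linarith
  qed
qed


lemma analytic:
  fixes Gp Gm D :: "real \<Rightarrow> real" and L :: real
  assumes mGp: "mono Gp" and mGm: "mono Gm"
    and Gp0: "\<And>z. 0 \<le> Gp z"
    and Q1: "\<And>a b. a \<le> b \<Longrightarrow> Gp b - Gp a \<le> exp b * (Gm b - Gm a)"
    and Q2: "\<And>a b. a \<le> b \<Longrightarrow> exp a * (Gm b - Gm a) \<le> Gp b - Gp a"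
    and P2: "\<And>z. Gp z \<le> exp z * Gm z"
    and P3: "\<And>z. exp z * (1 - Gm z) \<le> 1 - Gp z"
    and U: "\<And>z. 0 < Gm z \<and> Gm z < 1 \<and> Gp z < 1"
    and Ddef: "\<And>y. D y = ln ((1 - Gp (-y)) / (1 - Gm (-y)))"
  shows "\<exists>m>0. \<forall>x\<ge>L. \<forall>N. m \<le> (\<Prod>k<N. (1 - Gp (- (((\<lambda>y. y + D y) ^^ k) x))))"
proof -
  have gap0: "0 \<le> Gm z - Gp z" for z
  proof (cases "z \<le> 0")
    case True
    have "(1 - exp z) * Gm z \<le> Gm z - Gp z"
      by (rule gap_nonpos[OF Q1 P2 mGm True order_refl])
    moreover have "0 \<le> (1 - exp z) * Gm z" using True U[of z] by simp
    ultimately show ?thesis by linarith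
  next
    case False
    have "(exp z - 1) * (1 - Gm z) \<le> Gm z - Gp z"
      by (rule gap_pos[OF Q2 P3 mGm _ order_refl]) (use False in auto)
    moreover have "0 \<le> (exp z - 1) * (1 - Gm z)" using False U[of z] by simp
    ultimately show ?thesis by linarith
  qed
  have Dlow: "Gm (-y) - Gp (-y) \<le> D y" for y
  proof -
    define A where "A = 1 - Gp (-y)"
    define B where "B = 1 - Gm (-y)"
    have A: "0 < A" "A \<le> 1" using U[of "-y"] Gp0[of "-y"] by (auto simp: A_def)
    have B: "0 < B" using U[of "-y"] by (auto simp: B_def)
    have AB: "B \<le> A" using gap0[of "-y"] by (simp add: A_def B_def)
    have "ln (B / A) \<le> B / A - 1" using A B by (intro ln_le_minus_one) auto
    moreover have "ln (A / B) = - ln (B / A)" using A B by (simp add: ln_div)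
    moreover have "A - B \<le> (A - B) / A" using A AB
      by (simp add: le_divide_eq mult_right_le_one_le)
    moreover have "(A - B) / A = 1 - B / A" using A by (simp add: field_simps)
    ultimately have "A - B \<le> ln (A / B)" by linarith
    then show ?thesis by (simp add: Ddef A_def B_def)
  qed
  define BL where "BL = 1 - Gm (-L)"
  have BL: "0 < BL" "BL \<le> 1" using U[of "-L"] by (auto simp: BL_def)
  define Dmax where "Dmax = ln (1 / BL)"
  have Dmax0: "0 \<le> Dmax" using BL by (simp add: Dmax_def)
  have Dup: "D y \<le> Dmax" if "L \<le> y" for y
  proof -
    define A where "A = 1 - Gp (-y)"
    define B where "B = 1 - Gm (-y)"
    have A: "0 < A" "A \<le> 1" using U[of "-y"] Gp0[of "-y"] by (auto simp: A_def)
    have B: "0 < B" using U[of "-y"] by (auto simp: B_def)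
    have "Gm (-y) \<le> Gm (-L)" using mGm that by (simp add: monoD)
    then have "BL \<le> B" by (simp add: BL_def B_def)
    have "A / B \<le> 1 / BL" using A B BL \<open>BL \<le> B\<close>
      by (simp add: divide_simps) (metis mult_left_le_one_le less_le order_trans)
    then have "ln (A / B) \<le> ln (1 / BL)" using A B by (intro ln_mono) auto
    then show ?thesis by (simp add: Ddef Dmax_def A_def B_def)
  qed
  define C where "C = 2 * exp Dmax"
  have C0: "0 < C" by (simp add: C_def)
  define T where "T = max 1 (ln (2 * C))"
  have T1: "1 \<le> T" by (simp add: T_def)
  have CT: "C * exp (- T) \<le> 1 / 2"
  proof -
    have "ln (2 * C) \<le> T" by (simp add: T_def)
    then have "exp (ln (2 * C)) \<le> exp T" by simp
    then have "2 * C \<le> exp T" using C0 by simp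
    then show ?thesis by (simp add: exp_minus field_simps)
  qed
  define w where "w = - \<bar>T\<bar> - 1"
  define c where "c = \<bar>L\<bar> + 1"
  define d0 where "d0 = min ((1 - exp w) * Gm w) ((exp c - 1) * (1 - Gm c))"
  have d0: "0 < d0"
  proof -
    have "w < 0" by (simp add: w_def)
    then have "0 < (1 - exp w) * Gm w" using U[of w] by simp
    moreover have "0 < c" by (simp add: c_def)
    then have "0 < (exp c - 1) * (1 - Gm c)" using U[of c] by simp
    ultimately show ?thesis by (simp add: d0_def)
  qed
  have Dhead: "d0 \<le> D y" if "L \<le> y" "y \<le> T" for y
  proof (cases "-y \<le> 0")
    case True
    have "w \<le> -y" using that by (simp add: w_def)
    have "(1 - exp w) * Gm w \<le> Gm (-y) - Gp (-y)"
      by (rule gap_nonpos[OF Q1 P2 mGm True \<open>w \<le> -y\<close>])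
    then show ?thesis using Dlow[of y] by (simp add: d0_def)
  next
    case False
    have "-y \<le> c" using that by (simp add: c_def)
    have "(exp c - 1) * (1 - Gm c) \<le> Gm (-y) - Gp (-y)"
      by (rule gap_pos[OF Q2 P3 mGm _ \<open>-y \<le> c\<close>]) (use False in auto)
    then show ?thesis using Dlow[of y] by (simp add: d0_def)
  qed
  have Dtail: "Gp (-y) \<le> C * (exp (-y) - exp (-(y + D y)))" if "T \<le> y" "L \<le> y" for y
  proof -
    have y1: "1 \<le> y" using T1 that by simp
    have Ly: "L \<le> y" by fact
    have D0: "0 \<le> D y" using Dlow[of y] gap0[of "-y"] by linarith
    have DM: "D y \<le> Dmax" using Dup[OF Ly] .
    have e1: "exp (-y) \<le> 1 / 2"
    proof -
      have "exp (-y) \<le> exp (-1)" using y1 by simp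
      also have "exp (-1::real) \<le> 1/2"
        using exp_ge_add_one_self[of "1::real"] by (simp add: exp_minus field_simps)
      finally show ?thesis .
    qed
    have "(1 - exp (-y)) * Gm (-y) \<le> Gm (-y) - Gp (-y)"
      using P2[of "-y"] by (simp add: algebra_simps)
    also have "\<dots> \<le> D y" by (rule Dlow)
    finally have g1: "(1 - exp (-y)) * Gm (-y) \<le> D y" .
    have "Gm (-y) \<le> 2 * D y"
    proof -
      have "Gm (-y) * exp (-y) \<le> Gm (-y) * (1/2)"
        using e1 U[of "-y"] by (intro mult_left_mono) auto
      then have "Gm (-y) / 2 \<le> (1 - exp (-y)) * Gm (-y)"
        by (simp add: algebra_simps)
      then show ?thesis using g1 by linarith
    qed
    then have g2: "Gp (-y) \<le> exp (-y) * (2 * D y)"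
    proof -
      assume "Gm (-y) \<le> 2 * D y"
      then have "exp (-y) * Gm (-y) \<le> exp (-y) * (2 * D y)" by (intro mult_left_mono) auto
      then show ?thesis using P2[of "-y"] by linarith
    qed
    have g3: "D y \<le> exp Dmax * (1 - exp (- D y))"
    proof -
      have "1 + D y \<le> exp (D y)" by (rule exp_ge_add_one_self)
      then have "D y \<le> exp (D y) - 1" by linarith
      also have "\<dots> = exp (D y) * (1 - exp (- D y))" by (simp add: algebra_simps exp_minus)
      also have "\<dots> \<le> exp Dmax * (1 - exp (- D y))"
        using DM D0 by (intro mult_right_mono) auto
      finally show ?thesis .
    qed
    have ee: "exp (-y) * exp (- D y) = exp (-(y + D y))"
      by (simp add: exp_add[symmetric])
    have "Gp (-y) \<le> exp (-y) * (2 * (exp Dmax * (1 - exp (- D y))))"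
    proof -
      have "exp (-y) * (2 * D y) \<le> exp (-y) * (2 * (exp Dmax * (1 - exp (- D y))))"
        using g3 by (intro mult_left_mono) auto
      then show ?thesis using g2 by linarith
    qed
    also have "\<dots> = C * (exp (-y) - exp (-(y + D y)))"
      unfolding ee[symmetric] by (simp add: C_def algebra_simps)
    finally show ?thesis .
  qed
  define p where "p = 1 - Gp (-L)"
  have p: "0 < p" "p \<le> 1" using U[of "-L"] Gp0[of "-L"] by (auto simp: p_def)
  define K0 where "K0 = nat \<lceil>(T - L) / d0\<rceil> + 1"
  define m where "m = p ^ K0 / 2"
  have m0: "0 < m" using p by (simp add: m_def)
  have "\<forall>x\<ge>L. \<forall>N. m \<le> (\<Prod>k<N. (1 - Gp (- (((\<lambda>y. y + D y) ^^ k) x))))"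
  proof (intro allI impI)
    fix x N assume xL: "L \<le> x"
    define xs where "xs k = ((\<lambda>y. y + D y) ^^ k) x" for k
    have xsS: "xs (Suc k) = xs k + D (xs k)" for k by (simp add: xs_def)
    have D0: "0 \<le> D y" for y using Dlow[of y] gap0[of "-y"] by linarith
    have inc: "incseq xs" by (rule incseq_SucI) (simp add: xsS D0)
    have xsL: "L \<le> xs k" for k
    proof -
      have "xs 0 \<le> xs k" using inc by (simp add: incseq_def)
      then show ?thesis using xL by (simp add: xs_def)
    qed
    have H: "xs k \<le> T \<longrightarrow> x + real k * d0 \<le> xs k" for k
    proof (induction k)
      case 0 then show ?case by (simp add: xs_def)
    next
      case (Suc k)
      show ?case
      proof
        assume a: "xs (Suc k) \<le> T"
        have "xs k \<le> xs (Suc k)" by (simp add: xsS D0)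
        then have "xs k \<le> T" using a by linarith
        then have "x + real k * d0 \<le> xs k" using Suc.IH by blast
        moreover have "d0 \<le> D (xs k)" using Dhead[OF xsL \<open>xs k \<le> T\<close>] .
        ultimately show "x + real (Suc k) * d0 \<le> xs (Suc k)" by (simp add: xsS algebra_simps)
      qed
    qed
    have K0T: "T < xs K0"
    proof (rule ccontr)
      assume "\<not> T < xs K0"
      then have "x + real K0 * d0 \<le> T" using H[of K0] by auto
      then have "real K0 * d0 \<le> T - L" using xL by linarith
      then have "real K0 \<le> (T - L) / d0" using d0 by (simp add: field_simps)
      also have "\<dots> \<le> real (nat \<lceil>(T - L) / d0\<rceil>)" by linarith
      finally show False by (simp add: K0_def)
    qed
    define a where "a k = Gp (- xs k)" for k
    have a0: "0 \<le> a k" for k by (simp add: a_def Gp0)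
    have ap: "a k \<le> 1 - p" for k
      using mGp xsL[of k] by (simp add: a_def p_def monoD)
    have a1: "a k \<le> 1" for k using ap[of k] p by linarith
    have headprod: "p ^ n \<le> (\<Prod>k<n. (1 - a k))" for n
    proof -
      have "(\<Prod>k<n. p) \<le> (\<Prod>k<n. (1 - a k))"
        using p ap by (intro prod_mono) (auto simp: algebra_simps)
      then show ?thesis by simp
    qed
    have goal: "m \<le> (\<Prod>k<N. (1 - a k))"
    proof (cases "N \<le> K0")
      case True
      have "p ^ K0 \<le> p ^ N" using p True by (intro power_decreasing) auto
      moreover have "0 \<le> p ^ K0" using p by simp
      ultimately show ?thesis using headprod[of N] p unfolding m_def by linarith
    next
      case False
      have split: "{..<N} = {..<K0} \<union> {K0..<N}" using False by auto
      have "(\<Prod>k<N. (1 - a k)) = (\<Prod>k<K0. (1 - a k)) * (\<Prod>k\<in>{K0..<N}. (1 - a k))"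
        unfolding split by (subst prod.union_disjoint) auto
      have sumb: "(\<Sum>k\<in>{K0..<N}. a k) \<le> 1/2"
      proof -
        have "(\<Sum>k\<in>{K0..<N}. a k) \<le> (\<Sum>k\<in>{K0..<N}. C * (exp (- xs k) - exp (- xs (Suc k))))"
        proof (intro sum_mono)
          fix k assume "k \<in> {K0..<N}"
          then have "xs K0 \<le> xs k" using inc by (auto simp: incseq_def)
          then have "T \<le> xs k" using K0T by linarith
          from Dtail[OF this xsL[of k]] show "a k \<le> C * (exp (- xs k) - exp (- xs (Suc k)))"
            by (simp add: a_def xsS)
        qed
        also have "\<dots> = C * (\<Sum>k\<in>{K0..<N}. (exp (- xs k) - exp (- xs (Suc k))))"
          by (simp add: sum_distrib_left)
        also have "(\<Sum>k\<in>{K0..<N}. (exp (- xs k) - exp (- xs (Suc k)))) = exp (- xs K0) - exp (- xs N)"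
          using sum_Suc_diff'[of K0 N "\<lambda>k. - exp (- xs k)"] False by simp
        also have "C * (exp (- xs K0) - exp (- xs N)) \<le> C * exp (- T)"
        proof -
          have "exp (- xs K0) \<le> exp (- T)" using K0T by simp
          moreover have "0 < exp (- xs N)" by simp
          ultimately have "exp (- xs K0) - exp (- xs N) \<le> exp (- T)" by linarith
          then show ?thesis using C0 by (intro mult_left_mono) auto
        qed
        finally show ?thesis using CT by linarith
      qed
      have tail: "1/2 \<le> (\<Prod>k\<in>{K0..<N}. (1 - a k))"
        using prod_ge_one_minus_sum[of a K0 N, OF a0 a1] sumb by linarith
      have "m \<le> p ^ K0 * (1/2)" by (simp add: m_def)
      also have "\<dots> \<le> (\<Prod>k<K0. (1 - a k)) * (\<Prod>k\<in>{K0..<N}. (1 - a k))"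
        using headprod[of K0] tail p a1 by (intro mult_mono prod_nonneg) auto
      finally show ?thesis
        using \<open>(\<Prod>k<N. (1 - a k)) = _\<close> by simp
    qed
    then show "m \<le> (\<Prod>k<N. (1 - Gp (- (((\<lambda>y. y + D y) ^^ k) x))))"
      by (simp add: a_def xs_def)
  qed
  then show ?thesis using m0 by blast
qed



locale slm =
  fixes mu_p mu_m :: "real measure"
  assumes pp: "prob_space mu_p" and pm: "prob_space mu_m"
    and sp: "sets mu_p = sets borel" and sm: "sets mu_m = sets borel"
    and ac1: "absolutely_continuous mu_p mu_m" and ac2: "absolutely_continuous mu_m mu_p"
begin

interpretation P: prob_space mu_p by (rule pp)
interpretation N: prob_space mu_m by (rule pm)

lemma spaces: "space mu_p = UNIV" "space mu_m = UNIV"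
  using sets_eq_imp_space_eq[OF sp] sets_eq_imp_space_eq[OF sm] by auto

lemma RN_meas: "RN_deriv mu_m mu_p \<in> borel_measurable borel"
  using borel_measurable_RN_deriv[of mu_m mu_p] unfolding measurable_cong_sets[OF sm refl] .

lemma LLR_meas_borel[measurable]: "LLR mu_p mu_m \<in> borel_measurable borel"
  unfolding LLR_def[abs_def] using RN_meas by measurable

lemma LLR_meas_p[measurable]: "LLR mu_p mu_m \<in> borel_measurable mu_p"
  using LLR_meas_borel unfolding measurable_cong_sets[OF sp refl] .

lemma dens_ae: "AE s in mu_m. RN_deriv mu_m mu_p s = ennreal (exp (LLR mu_p mu_m s))"
proof -
  have fin: "AE s in mu_m. RN_deriv mu_m mu_p s \<noteq> \<infinity>"
  proof -
    have "sets mu_p = sets mu_m" using sp sm by (rule trans[OF _ sym])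
    from N.RN_deriv_finite[OF P.sigma_finite_measure_axioms ac2 this] show ?thesis .
  qed
  have dens: "density mu_m (RN_deriv mu_m mu_p) = mu_p"
  proof -
    have "sets mu_p = sets mu_m" using sp sm by (rule trans[OF _ sym])
    from N.density_RN_deriv[OF ac2 this] show ?thesis .
  qed
  define Z where "Z = {s. RN_deriv mu_m mu_p s = 0}"
  have Zs: "Z \<in> sets borel" unfolding Z_def using RN_meas by measurable
  have "emeasure mu_p Z = (\<integral>\<^sup>+ s. RN_deriv mu_m mu_p s * indicator Z s \<partial>mu_m)"
    using Zs sm by (subst dens[symmetric]) (simp add: emeasure_density)
  also have "\<dots> = (\<integral>\<^sup>+ s. 0 \<partial>mu_m)"
    by (intro nn_integral_cong) (auto simp: Z_def indicator_def)
  finally have "emeasure mu_p Z = 0" by simp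
  moreover have "Z \<in> sets mu_p" using Zs sp by simp
  ultimately have "Z \<in> null_sets mu_p" by (rule null_setsI)
  then have "Z \<in> null_sets mu_m" using ac1 unfolding absolutely_continuous_def by blast
  then have nz: "AE s in mu_m. RN_deriv mu_m mu_p s \<noteq> 0"
    by (rule AE_I') (auto simp: Z_def)
  show ?thesis using fin nz
  proof eventually_elim
    case (elim s)
    show ?case
    proof (cases "RN_deriv mu_m mu_p s" rule: ennreal_cases)
      case (real r)
      then have "r \<noteq> 0" using elim by auto
      then have "0 < r" using real by simp
      then show ?thesis using real by (simp add: LLR_def)
    next
      case top then show ?thesis using elim by simp
    qed
  qed
qed

lemma dens_int: "S \<in> sets borel \<Longrightarrow>
   emeasure mu_p S = (\<integral>\<^sup>+ s. ennreal (exp (LLR mu_p mu_m s)) * indicator S s \<partial>mu_m)"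
proof -
  assume S: "S \<in> sets borel"
  have dens: "density mu_m (RN_deriv mu_m mu_p) = mu_p"
  proof -
    have "sets mu_p = sets mu_m" using sp sm by (rule trans[OF _ sym])
    from N.density_RN_deriv[OF ac2 this] show ?thesis .
  qed
  have "emeasure mu_p S = (\<integral>\<^sup>+ s. RN_deriv mu_m mu_p s * indicator S s \<partial>mu_m)"
    using S sm by (subst dens[symmetric]) (simp add: emeasure_density)
  also have "\<dots> = (\<integral>\<^sup>+ s. ennreal (exp (LLR mu_p mu_m s)) * indicator S s \<partial>mu_m)"
    using dens_ae by (intro nn_integral_cong_AE) auto
  finally show ?thesis .
qed

lemma bound_le:
  assumes S: "S \<in> sets borel" and b: "\<And>s. s \<in> S \<Longrightarrow> LLR mu_p mu_m s \<le> b"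
  shows "measure mu_p S \<le> exp b * measure mu_m S"
proof -
  have "emeasure mu_p S \<le> (\<integral>\<^sup>+ s. ennreal (exp b) * indicator S s \<partial>mu_m)"
    unfolding dens_int[OF S] using b
    by (intro nn_integral_mono) (auto simp: indicator_def)
  also have "\<dots> = ennreal (exp b) * emeasure mu_m S"
    using S sm by (simp add: nn_integral_cmult_indicator)
  finally show ?thesis
    by (simp add: P.emeasure_eq_measure N.emeasure_eq_measure ennreal_mult'[symmetric])
qed

lemma bound_ge:
  assumes S: "S \<in> sets borel" and b: "\<And>s. s \<in> S \<Longrightarrow> b \<le> LLR mu_p mu_m s"
  shows "exp b * measure mu_m S \<le> measure mu_p S"
proof -
  have "(\<integral>\<^sup>+ s. ennreal (exp b) * indicator S s \<partial>mu_m) \<le> emeasure mu_p S"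
    unfolding dens_int[OF S] using b
    by (intro nn_integral_mono) (auto simp: indicator_def)
  moreover have "(\<integral>\<^sup>+ s. ennreal (exp b) * indicator S s \<partial>mu_m) = ennreal (exp b) * emeasure mu_m S"
    using S sm by (simp add: nn_integral_cmult_indicator)
  ultimately show ?thesis
    by (simp add: P.emeasure_eq_measure N.emeasure_eq_measure ennreal_mult'[symmetric])
qed


definition lev :: "real \<Rightarrow> real set" where "lev z = {s. LLR mu_p mu_m s \<le> z}"

lemma lev_sets[measurable]: "lev z \<in> sets borel"
  unfolding lev_def by measurable

lemma Gp_lev: "Gp mu_p mu_m z = measure mu_p (lev z)"
  by (simp add: Gp_def lev_def spaces)
lemma Gm_lev: "Gm mu_p mu_m z = measure mu_m (lev z)"
  by (simp add: Gm_def lev_def spaces)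

lemma lev_mono: "a \<le> b \<Longrightarrow> lev a \<subseteq> lev b"
  by (auto simp: lev_def)

lemma mono_Gp: "mono (Gp mu_p mu_m)"
  unfolding mono_def Gp_lev using lev_mono sp by (auto intro!: P.finite_measure_mono)
lemma mono_Gm: "mono (Gm mu_p mu_m)"
  unfolding mono_def Gm_lev using lev_mono sm by (auto intro!: N.finite_measure_mono)

lemma Q1: "a \<le> b \<Longrightarrow> Gp mu_p mu_m b - Gp mu_p mu_m a
   \<le> exp b * (Gm mu_p mu_m b - Gm mu_p mu_m a)"
proof -
  assume ab: "a \<le> b"
  have "Gp mu_p mu_m b - Gp mu_p mu_m a = measure mu_p (lev b - lev a)"
    unfolding Gp_lev using lev_mono[OF ab] sp by (subst P.finite_measure_Diff) auto
  also have "\<dots> \<le> exp b * measure mu_m (lev b - lev a)"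
    by (rule bound_le) (auto simp: lev_def)
  also have "measure mu_m (lev b - lev a) = Gm mu_p mu_m b - Gm mu_p mu_m a"
    unfolding Gm_lev using lev_mono[OF ab] sm by (subst N.finite_measure_Diff) auto
  finally show ?thesis .
qed

lemma Q2: "a \<le> b \<Longrightarrow> exp a * (Gm mu_p mu_m b - Gm mu_p mu_m a)
   \<le> Gp mu_p mu_m b - Gp mu_p mu_m a"
proof -
  assume ab: "a \<le> b"
  have "Gm mu_p mu_m b - Gm mu_p mu_m a = measure mu_m (lev b - lev a)"
    unfolding Gm_lev using lev_mono[OF ab] sm by (subst N.finite_measure_Diff) auto
  moreover have "exp a * measure mu_m (lev b - lev a) \<le> measure mu_p (lev b - lev a)"
    by (rule bound_ge) (auto simp: lev_def)
  moreover have "measure mu_p (lev b - lev a) = Gp mu_p mu_m b - Gp mu_p mu_m a"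
    unfolding Gp_lev using lev_mono[OF ab] sp by (subst P.finite_measure_Diff) auto
  ultimately show ?thesis by simp
qed

lemma P2: "Gp mu_p mu_m z \<le> exp z * Gm mu_p mu_m z"
  unfolding Gp_lev Gm_lev by (rule bound_le) (auto simp: lev_def)

lemma compl_p: "1 - Gp mu_p mu_m z = measure mu_p {s. z < LLR mu_p mu_m s}"
proof -
  have "{s. z < LLR mu_p mu_m s} = space mu_p - lev z" by (auto simp: lev_def spaces)
  then show ?thesis unfolding Gp_lev using sp by (simp add: P.prob_compl)
qed
lemma compl_m: "1 - Gm mu_p mu_m z = measure mu_m {s. z < LLR mu_p mu_m s}"
proof -
  have "{s. z < LLR mu_p mu_m s} = space mu_m - lev z" by (auto simp: lev_def spaces)
  then show ?thesis unfolding Gm_lev using sm by (simp add: N.prob_compl)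
qed

lemma P3: "exp z * (1 - Gm mu_p mu_m z) \<le> 1 - Gp mu_p mu_m z"
  unfolding compl_p compl_m by (rule bound_ge) auto

lemma both_pos:
  assumes S: "S \<in> sets borel" and pos: "(measure mu_p S + measure mu_m S) / 2 > 0"
  shows "measure mu_p S > 0 \<and> measure mu_m S > 0"
proof -
  have Sp: "S \<in> sets mu_p" and Sm: "S \<in> sets mu_m" using S sp sm by auto
  have a: "measure mu_m S = 0" if "measure mu_p S = 0"
  proof -
    have "S \<in> null_sets mu_p" using that Sp by (simp add: P.emeasure_eq_measure null_setsI)
    then have "S \<in> null_sets mu_m" using ac1 unfolding absolutely_continuous_def by blast
    then show ?thesis by (auto dest!: null_setsD1 simp: measure_def)
  qed
  have b: "measure mu_p S = 0" if "measure mu_m S = 0"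
  proof -
    have "S \<in> null_sets mu_m" using that Sm by (simp add: N.emeasure_eq_measure null_setsI)
    then have "S \<in> null_sets mu_p" using ac2 unfolding absolutely_continuous_def by blast
    then show ?thesis by (auto dest!: null_setsD1 simp: measure_def)
  qed
  have "0 \<le> measure mu_p S" "0 \<le> measure mu_m S" by auto
  moreover have "measure mu_p S \<noteq> 0"
  proof
    assume "measure mu_p S = 0" then show False using a pos by simp
  qed
  moreover have "measure mu_m S \<noteq> 0"
  proof
    assume "measure mu_m S = 0" then show False using b pos by simp
  qed
  ultimately show ?thesis by linarith
qed

lemma U:
  assumes unbounded: "\<forall>M::real.
        (measure mu_p {s \<in> space mu_p. LLR mu_p mu_m s > M}
          + measure mu_m {s \<in> space mu_m. LLR mu_p mu_m s > M}) / 2 > 0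
      \<and> (measure mu_p {s \<in> space mu_p. LLR mu_p mu_m s < -M}
          + measure mu_m {s \<in> space mu_m. LLR mu_p mu_m s < -M}) / 2 > 0"
  shows "0 < Gm mu_p mu_m z \<and> Gm mu_p mu_m z < 1 \<and> Gp mu_p mu_m z < 1"
proof -
  have up: "measure mu_p {s. z < LLR mu_p mu_m s} > 0 \<and> measure mu_m {s. z < LLR mu_p mu_m s} > 0"
    using unbounded[rule_format, of z] by (intro both_pos) (auto simp: spaces)
  have lo: "measure mu_p {s. LLR mu_p mu_m s < z} > 0 \<and> measure mu_m {s. LLR mu_p mu_m s < z} > 0"
    using unbounded[rule_format, of "-z"] by (intro both_pos) (auto simp: spaces)
  have "measure mu_m {s. LLR mu_p mu_m s < z} \<le> measure mu_m (lev z)"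
    using sm by (intro N.finite_measure_mono) (auto simp: lev_def)
  then have "0 < Gm mu_p mu_m z" using lo by (simp add: Gm_lev)
  moreover have "Gm mu_p mu_m z < 1" using up compl_m[of z] by linarith
  moreover have "Gp mu_p mu_m z < 1" using up compl_p[of z] by linarith
  ultimately show ?thesis by blast
qed

lemma ana_result:
  assumes unbounded: "\<forall>M::real.
        (measure mu_p {s \<in> space mu_p. LLR mu_p mu_m s > M}
          + measure mu_m {s \<in> space mu_m. LLR mu_p mu_m s > M}) / 2 > 0
      \<and> (measure mu_p {s \<in> space mu_p. LLR mu_p mu_m s < -M}
          + measure mu_m {s \<in> space mu_m. LLR mu_p mu_m s < -M}) / 2 > 0"
  shows "\<exists>m>0. \<forall>x\<ge>L. \<forall>N. m \<le> (\<Prod>k<N. (1 - Gp mu_p mu_m (- (((\<lambda>y. y + Dp mu_p mu_m y) ^^ k) x))))"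
  by (rule analytic[OF mono_Gp mono_Gm _ Q1 Q2 P2 P3 U[OF unbounded]])
     (auto simp: Gp_def Dp_def)

end


lemma pub_local: "(\<forall>i<n. f i = g i) \<Longrightarrow> pubLLR mu_p mu_m n f = pubLLR mu_p mu_m n g"
proof (induction mu_p mu_m n f arbitrary: g rule: pubLLR.induct)
  case (3 mu_p mu_m n w)
  have "pubLLR mu_p mu_m (Suc n) w = pubLLR mu_p mu_m (Suc n) g" using 3 by auto
  moreover have "w (Suc n) = g (Suc n)" using 3 by auto
  ultimately show ?case by (simp add: Let_def)
qed auto

context slm begin

lemma Gp_meas[measurable]: "Gp mu_p mu_m \<in> borel_measurable borel"
  using mono_Gp by (rule borel_measurable_mono)
lemma Gm_meas[measurable]: "Gm mu_p mu_m \<in> borel_measurable borel"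
  using mono_Gm by (rule borel_measurable_mono)
lemma Dp_meas[measurable]: "Dp mu_p mu_m \<in> borel_measurable borel"
  unfolding Dp_def[abs_def] by measurable
lemma Dm_meas[measurable]: "Dm mu_p mu_m \<in> borel_measurable borel"
  unfolding Dm_def[abs_def] by measurable

lemma meas_pub: "{..<n} \<subseteq> K \<Longrightarrow> pubLLR mu_p mu_m n \<in> borel_measurable (PiM K (\<lambda>_. mu_p))"
proof (induction n rule: nat_less_induct)
  case (1 n)
  show ?case
  proof (cases n)
    case 0 then show ?thesis by simp
  next
    case (Suc n1)
    show ?thesis
    proof (cases n1)
      case 0 then show ?thesis using Suc by simp
    next
      case (Suc n2)
      have IH: "pubLLR mu_p mu_m (Suc n2) \<in> borel_measurable (PiM K (\<lambda>_. mu_p))"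
      proof -
        have "{..<Suc n2} \<subseteq> K" using 1(2) \<open>n = Suc n1\<close> Suc by auto
        moreover have "Suc n2 < n" using \<open>n = Suc n1\<close> Suc by simp
        ultimately show ?thesis using 1(1) by blast
      qed
      have inK: "Suc n2 \<in> K" using 1 \<open>n = Suc n1\<close> Suc by auto
      have c: "(\<lambda>w. w (Suc n2)) \<in> measurable (PiM K (\<lambda>_. mu_p)) mu_p"
        using inK by (rule measurable_component_singleton)
      have L: "(\<lambda>w. LLR mu_p mu_m (w (Suc n2))) \<in> borel_measurable (PiM K (\<lambda>_. mu_p))"
        using measurable_compose[OF c LLR_meas_p] .
      show ?thesis unfolding \<open>n = Suc n1\<close> Suc pubLLR.simps Let_def
        using IH L by measurable
    qed
  qed
qed

lemma traj:
  assumes t: "1 \<le> t" and x: "pubLLR mu_p mu_m t w = x"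
  shows "(\<forall>j<k. 0 < ((\<lambda>y. y + Dp mu_p mu_m y) ^^ j) x + LLR mu_p mu_m (w (t + j)))
     \<Longrightarrow> pubLLR mu_p mu_m (t + k) w = ((\<lambda>y. y + Dp mu_p mu_m y) ^^ k) x"
proof (induction k)
  case 0 then show ?case using x by simp
next
  case (Suc k)
  obtain n where n: "t + k = Suc n" using t by (cases "t + k") auto
  have l: "pubLLR mu_p mu_m (Suc n) w = ((\<lambda>y. y + Dp mu_p mu_m y) ^^ k) x"
    using Suc n by auto
  have c: "0 < ((\<lambda>y. y + Dp mu_p mu_m y) ^^ k) x + LLR mu_p mu_m (w (Suc n))"
    using Suc.prems n by (metis lessI)
  have "t + Suc k = Suc (Suc n)" using n by simp
  then show ?case using l c by (simp add: Let_def)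
qed

lemma traj_iff:
  assumes t: "1 \<le> t" and x: "pubLLR mu_p mu_m t w = x"
  shows "(\<forall>\<tau>\<ge>t. action mu_p mu_m \<tau> w = 1) \<longleftrightarrow>
     (\<forall>k. 0 < ((\<lambda>y. y + Dp mu_p mu_m y) ^^ k) x + LLR mu_p mu_m (w (t + k)))"
proof
  assume A: "\<forall>\<tau>\<ge>t. action mu_p mu_m \<tau> w = 1"
  have "\<forall>j<k. 0 < ((\<lambda>y. y + Dp mu_p mu_m y) ^^ j) x + LLR mu_p mu_m (w (t + j))" for k
  proof (induction k)
    case 0 then show ?case by simp
  next
    case (Suc k)
    have "pubLLR mu_p mu_m (t + k) w = ((\<lambda>y. y + Dp mu_p mu_m y) ^^ k) x"
      using traj[OF t x Suc] .
    moreover have "action mu_p mu_m (t + k) w = 1" using A by simp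
    ultimately have "0 < ((\<lambda>y. y + Dp mu_p mu_m y) ^^ k) x + LLR mu_p mu_m (w (t + k))"
      by (simp add: action_def split: if_splits)
    then show ?case using Suc by (auto simp: less_Suc_eq)
  qed
  then show "\<forall>k. 0 < ((\<lambda>y. y + Dp mu_p mu_m y) ^^ k) x + LLR mu_p mu_m (w (t + k))" by blast
next
  assume B: "\<forall>k. 0 < ((\<lambda>y. y + Dp mu_p mu_m y) ^^ k) x + LLR mu_p mu_m (w (t + k))"
  show "\<forall>\<tau>\<ge>t. action mu_p mu_m \<tau> w = 1"
  proof (intro allI impI)
    fix \<tau> assume "t \<le> \<tau>"
    then obtain k where k: "\<tau> = t + k" using le_Suc_ex by blast
    have "pubLLR mu_p mu_m (t + k) w = ((\<lambda>y. y + Dp mu_p mu_m y) ^^ k) x"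
      using traj[OF t x] B by blast
    then show "action mu_p mu_m \<tau> w = 1" using B[rule_format, of k] k
      by (simp add: action_def)
  qed
qed

end


context slm begin

interpretation P: prob_space mu_p by (rule pp)
interpretation N: prob_space mu_m by (rule pm)

interpretation PP: product_prob_space "\<lambda>_::nat. mu_p" "UNIV :: nat set"
  by (simp add: product_prob_space_def product_prob_space_axioms_def product_sigma_finite_def
      pp prob_space_imp_sigma_finite)

lemma Pplus_eq: "Pplus mu_p = PiM UNIV (\<lambda>_. mu_p)" by (simp add: Pplus_def)

lemma space_Pplus: "space (Pplus mu_p) = UNIV"
  by (auto simp: Pplus_def space_PiM spaces PiE_def extensional_def)

lemma indep_coords: "prob_space.indep_vars (Pplus mu_p) (\<lambda>_. mu_p) (\<lambda>(i::nat) w. w i) UNIV"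
proof -
  have "prob_space.indep_vars (PiM (UNIV::nat set) (\<lambda>_. mu_p)) (\<lambda>_. mu_p) (\<lambda>(i::nat) w. w i) UNIV"
  proof (rule iffD2[OF PP.indep_vars_iff_distr_eq_PiM])
    show "distr (PiM (UNIV::nat set) (\<lambda>_. mu_p)) (PiM UNIV (\<lambda>_. mu_p)) (\<lambda>x. \<lambda>i\<in>UNIV. x i)
        = PiM UNIV (\<lambda>i. distr (PiM (UNIV::nat set) (\<lambda>_. mu_p)) mu_p (\<lambda>w. w i))"
    proof -
      have "(\<lambda>x::nat\<Rightarrow>real. restrict x UNIV) = (\<lambda>x. x)" by (auto simp: restrict_def fun_eq_iff)
      then show ?thesis by (simp add: PP.PiM_component distr_id)
    qed
  qed auto
  then show ?thesis by (simp add: Pplus_def)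
qed


lemma block_prob:
  fixes t N :: nat and xs :: "nat \<Rightarrow> real"
  defines "BN \<equiv> {w. \<forall>k<N. 0 < xs k + LLR mu_p mu_m (w (t + k))}"
  shows "measure (Pplus mu_p) BN = (\<Prod>k<N. (1 - Gp mu_p mu_m (- xs k)))"
proof -
  define S where "S i = {s. 0 < xs (i - t) + LLR mu_p mu_m s}" for i
  have Ss: "S i \<in> sets mu_p" for i unfolding S_def using sp by measurable
  have "BN = {w \<in> space (PiM UNIV (\<lambda>_. mu_p)). \<forall>i\<in>{t..<t+N}. w i \<in> S i}"
    unfolding BN_def S_def space_Pplus[unfolded Pplus_def]
  proof (auto simp: Ball_def)
    fix w :: "nat \<Rightarrow> real" and k
    assume a: "\<forall>i. t \<le> i \<and> i < t + N \<longrightarrow> 0 < xs (i - t) + LLR mu_p mu_m (w i)" and k: "k < N"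
    show "0 < xs k + LLR mu_p mu_m (w (t + k))" using a[rule_format, of "t + k"] k by simp
  next
    fix w :: "nat \<Rightarrow> real" and i
    assume a: "\<forall>k<N. 0 < xs k + LLR mu_p mu_m (w (t + k))" and i: "t \<le> i" "i < t + N"
    then show "0 < xs (i - t) + LLR mu_p mu_m (w i)" using a[rule_format, of "i - t"] by simp
  qed
  then have "emeasure (Pplus mu_p) BN = (\<Prod>i\<in>{t..<t+N}. emeasure mu_p (S i))"
    unfolding Pplus_def using Ss by (simp add: PP.emeasure_PiM_Collect)
  also have "\<dots> = ennreal (\<Prod>i\<in>{t..<t+N}. measure mu_p (S i))"
    by (simp add: P.emeasure_eq_measure prod_ennreal)
  finally have "measure (Pplus mu_p) BN = (\<Prod>i\<in>{t..<t+N}. measure mu_p (S i))"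
    by (simp add: measure_def prod_nonneg)
  also have "\<dots> = (\<Prod>k<N. measure mu_p (S (k + t)))"
    using prod.shift_bounds_nat_ivl[of "\<lambda>i. measure mu_p (S i)" 0 t N]
    by (simp add: add.commute lessThan_atLeast0)
  also have "\<dots> = (\<Prod>k<N. (1 - Gp mu_p mu_m (- xs k)))"
  proof (intro prod.cong refl)
    fix k
    have "{s. 0 < xs k + LLR mu_p mu_m s} = {s. - xs k < LLR mu_p mu_m s}" by auto
    then show "measure mu_p (S (k + t)) = 1 - Gp mu_p mu_m (- xs k)"
      by (simp add: S_def compl_p)
  qed
  finally show ?thesis .
qed


interpretation Q: prob_space "Pplus mu_p" unfolding Pplus_def by (rule prob_space_PiM) (rule pp)

lemma indep_prod:
  fixes t N :: nat and xs :: "nat \<Rightarrow> real" and x :: real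
  defines "BN \<equiv> {w. \<forall>k<N. 0 < xs k + LLR mu_p mu_m (w (t + k))}"
  shows "measure (Pplus mu_p) (ellEq mu_p mu_m t x \<inter> BN)
       = measure (Pplus mu_p) (ellEq mu_p mu_m t x) * measure (Pplus mu_p) BN"
    and "ellEq mu_p mu_m t x \<in> sets (Pplus mu_p)" and "BN \<in> sets (Pplus mu_p)"
proof -
  define A where "A = {..<t}"
  define B where "B = {t..<t+N}"
  have iv: "Q.indep_var (PiM A (\<lambda>_. mu_p)) (\<lambda>\<omega>. restrict (\<lambda>i. \<omega> i) A)
                        (PiM B (\<lambda>_. mu_p)) (\<lambda>\<omega>. restrict (\<lambda>i. \<omega> i) B)"
    by (rule Q.indep_var_restrict[OF indep_coords]) (auto simp: A_def B_def)
  define A' where "A' = pubLLR mu_p mu_m t -` {x} \<inter> space (PiM A (\<lambda>_. mu_p))"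
  define S where "S i = {s. 0 < xs (i - t) + LLR mu_p mu_m s}" for i
  define B' where "B' = PiE B S"
  have A's: "A' \<in> sets (PiM A (\<lambda>_. mu_p))"
    unfolding A'_def using meas_pub[of t A] by (auto simp: A_def intro!: measurable_sets)
  have Ss: "S i \<in> sets mu_p" for i unfolding S_def using sp by measurable
  have B's: "B' \<in> sets (PiM B (\<lambda>_. mu_p))"
    unfolding B'_def B_def using Ss by (intro sets_PiM_I_finite) auto
  have spA: "restrict w A \<in> space (PiM A (\<lambda>_. mu_p))" for w :: "nat \<Rightarrow> real"
    by (simp add: space_PiM spaces)
  have eqA: "(\<lambda>\<omega>. restrict (\<lambda>i. \<omega> i) A) -` A' \<inter> space (Pplus mu_p) = ellEq mu_p mu_m t x"
  proof -
    have "pubLLR mu_p mu_m t (restrict w A) = pubLLR mu_p mu_m t w" for w :: "nat \<Rightarrow> real"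
      by (rule pub_local) (auto simp: A_def)
    then show ?thesis using spA by (auto simp: A'_def ellEq_def space_Pplus)
  qed
  have eqB: "(\<lambda>\<omega>. restrict (\<lambda>i. \<omega> i) B) -` B' \<inter> space (Pplus mu_p) = BN"
  proof (auto simp: B'_def B_def BN_def space_Pplus S_def PiE_def Pi_def)
    fix w :: "nat \<Rightarrow> real" and k
    assume a: "\<forall>i. t \<le> i \<and> i < t + N \<longrightarrow> 0 < xs (i - t) + LLR mu_p mu_m (w i)" and k: "k < N"
    show "0 < xs k + LLR mu_p mu_m (w (t + k))" using a[rule_format, of "t + k"] k by simp
  next
    fix w :: "nat \<Rightarrow> real" and i
    assume a: "\<forall>k<N. 0 < xs k + LLR mu_p mu_m (w (t + k))" and i: "t \<le> i" "i < t + N"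
    then show "0 < xs (i - t) + LLR mu_p mu_m (w i)" using a[rule_format, of "i - t"] by simp
  qed
  have eqAB: "(\<lambda>\<omega>. (restrict (\<lambda>i. \<omega> i) A, restrict (\<lambda>i. \<omega> i) B)) -` (A' \<times> B') \<inter> space (Pplus mu_p)
     = ellEq mu_p mu_m t x \<inter> BN"
    using eqA eqB by auto
  show "measure (Pplus mu_p) (ellEq mu_p mu_m t x \<inter> BN)
       = measure (Pplus mu_p) (ellEq mu_p mu_m t x) * measure (Pplus mu_p) BN"
    using Q.indep_varD[OF iv A's B's] unfolding eqA eqB eqAB .
  have mA: "(\<lambda>\<omega>. restrict (\<lambda>i. \<omega> i) A) \<in> measurable (Pplus mu_p) (PiM A (\<lambda>_. mu_p))"
    unfolding Pplus_def by (simp add: measurable_restrict_subset)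
  have mB: "(\<lambda>\<omega>. restrict (\<lambda>i. \<omega> i) B) \<in> measurable (Pplus mu_p) (PiM B (\<lambda>_. mu_p))"
    unfolding Pplus_def by (simp add: measurable_restrict_subset)
  show "ellEq mu_p mu_m t x \<in> sets (Pplus mu_p)"
    using measurable_sets[OF mA A's] unfolding eqA .
  show "BN \<in> sets (Pplus mu_p)"
    using measurable_sets[OF mB B's] unfolding eqB .
qed


lemma cond_bound:
  assumes t: "1 \<le> t"
    and hm: "\<forall>N. m \<le> (\<Prod>k<N. (1 - Gp mu_p mu_m (- (((\<lambda>y. y + Dp mu_p mu_m y) ^^ k) x))))"
  shows "measure (Pplus mu_p) (ellEq mu_p mu_m t x) * m
     \<le> measure (Pplus mu_p) (eventE mu_p mu_m t \<inter> ellEq mu_p mu_m t x)"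
proof -
  define xs where "xs k = ((\<lambda>y. y + Dp mu_p mu_m y) ^^ k) x" for k
  define BN where "BN N = {w. \<forall>k<N. 0 < xs k + LLR mu_p mu_m (w (t + k))}" for N
  define C where "C N = ellEq mu_p mu_m t x \<inter> BN N" for N
  have Cs: "range C \<subseteq> sets (Pplus mu_p)"
    using indep_prod(2,3) unfolding C_def BN_def by blast
  have dec: "decseq C" unfolding decseq_def C_def BN_def by auto
  have lim: "(\<lambda>N. measure (Pplus mu_p) (C N)) \<longlonglongrightarrow> measure (Pplus mu_p) (\<Inter>N. C N)"
    by (rule Q.finite_Lim_measure_decseq[OF Cs dec])
  have inter: "(\<Inter>N. C N) = eventE mu_p mu_m t \<inter> ellEq mu_p mu_m t x"
  proof (intro set_eqI iffI)
    fix w assume "w \<in> (\<Inter>N. C N)"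
    then have w: "w \<in> ellEq mu_p mu_m t x" and k: "\<forall>k. 0 < xs k + LLR mu_p mu_m (w (t + k))"
      by (auto simp: C_def BN_def)
    have "pubLLR mu_p mu_m t w = x" using w by (simp add: ellEq_def)
    then have "\<forall>\<tau>\<ge>t. action mu_p mu_m \<tau> w = 1" using traj_iff[OF t] k by (simp add: xs_def)
    then show "w \<in> eventE mu_p mu_m t \<inter> ellEq mu_p mu_m t x"
      using w by (simp add: eventE_def space_Pplus)
  next
    fix w assume "w \<in> eventE mu_p mu_m t \<inter> ellEq mu_p mu_m t x"
    then have w: "w \<in> ellEq mu_p mu_m t x" and a: "\<forall>\<tau>\<ge>t. action mu_p mu_m \<tau> w = 1"
      by (auto simp: eventE_def)
    have "pubLLR mu_p mu_m t w = x" using w by (simp add: ellEq_def)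
    then have "\<forall>k. 0 < xs k + LLR mu_p mu_m (w (t + k))" using traj_iff[OF t] a by (simp add: xs_def)
    then show "w \<in> (\<Inter>N. C N)" using w by (auto simp: C_def BN_def)
  qed
  have "measure (Pplus mu_p) (ellEq mu_p mu_m t x) * m \<le> measure (Pplus mu_p) (C N)" for N
  proof -
    have "measure (Pplus mu_p) (C N) = measure (Pplus mu_p) (ellEq mu_p mu_m t x) * measure (Pplus mu_p) (BN N)"
      unfolding C_def BN_def by (rule indep_prod(1))
    also have "measure (Pplus mu_p) (BN N) = (\<Prod>k<N. (1 - Gp mu_p mu_m (- xs k)))"
      unfolding BN_def by (rule block_prob)
    finally show ?thesis using hm[rule_format, of N]
      by (simp add: xs_def mult_left_mono)
  qed
  then show ?thesis using LIMSEQ_le_const[OF lim] unfolding inter by blast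
qed

end

theorem lemma6:
  fixes mu_p mu_m :: "real measure"
  assumes "prob_space mu_p" and "prob_space mu_m"
    and "sets mu_p = sets borel" and "sets mu_m = sets borel"
    and "absolutely_continuous mu_p mu_m" and "absolutely_continuous mu_m mu_p"
    and unbounded: "\<forall>M::real.
        (measure mu_p {s \<in> space mu_p. LLR mu_p mu_m s > M}
          + measure mu_m {s \<in> space mu_m. LLR mu_p mu_m s > M}) / 2 > 0
      \<and> (measure mu_p {s \<in> space mu_p. LLR mu_p mu_m s < -M}
          + measure mu_m {s \<in> space mu_m. LLR mu_p mu_m s < -M}) / 2 > 0"
    and "continuous_on UNIV (Gp mu_p mu_m)" and "continuous_on UNIV (Gm mu_p mu_m)"
    and "\<exists>x0::real. convex_on {..<x0} (Gm mu_p mu_m)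
                 \<and> (\<forall>x<x0. Gm mu_p mu_m differentiable at x)"
  shows "\<forall>L::real. \<exists>m>0. \<forall>t\<ge>1. \<forall>x\<ge>L.
           measure (Pplus mu_p) (ellEq mu_p mu_m t x) > 0 \<longrightarrow>
           measure (Pplus mu_p) (eventE mu_p mu_m t \<inter> ellEq mu_p mu_m t x)
             / measure (Pplus mu_p) (ellEq mu_p mu_m t x) \<ge> m"
proof
  fix L :: real
  interpret slm mu_p mu_m
    by (rule slm.intro) (fact assms)+
  obtain m where m0: "m > 0" and hm: "\<forall>x\<ge>L. \<forall>N. m \<le> (\<Prod>k<N. (1 - Gp mu_p mu_m (- (((\<lambda>y. y + Dp mu_p mu_m y) ^^ k) x))))"
    using ana_result[OF unbounded, of L] by blast
  show "\<exists>m>0. \<forall>t\<ge>1. \<forall>x\<ge>L.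
           measure (Pplus mu_p) (ellEq mu_p mu_m t x) > 0 \<longrightarrow>
           measure (Pplus mu_p) (eventE mu_p mu_m t \<inter> ellEq mu_p mu_m t x)
             / measure (Pplus mu_p) (ellEq mu_p mu_m t x) \<ge> m"
  proof (intro exI[of _ m] conjI allI impI m0)
    fix t :: nat and x :: real
    assume t: "1 \<le> t" and xL: "L \<le> x" and pos: "measure (Pplus mu_p) (ellEq mu_p mu_m t x) > 0"
    have "measure (Pplus mu_p) (ellEq mu_p mu_m t x) * m
       \<le> measure (Pplus mu_p) (eventE mu_p mu_m t \<inter> ellEq mu_p mu_m t x)"
      using cond_bound[OF t] hm xL by blast
    then show "m \<le> measure (Pplus mu_p) (eventE mu_p mu_m t \<inter> ellEq mu_p mu_m t x)
             / measure (Pplus mu_p) (ellEq mu_p mu_m t x)"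
      using pos by (simp add: le_divide_eq mult.commute)
  qed
qed

end
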